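(* Let $A$ (in $\mathcal H$) and $B$ (in $\mathcal K$) be densely defined operators and suppose $A\dashv B$ with (possibly unbounded) intertwining operator $T$. If the resolvent set $\rho(A)$ is nonempty, then $T$ is bounded (and everywhere defined).
   Context: A closed densely defined operator $T:D(T)\subseteq\mathcal H\to\mathcal K$ is an intertwining operator for $A$ and $B$ if (io0) $D(A)\subseteq D(T)$ and $A\xi\in D(T)$ for all $\xi\in D(A)$ (i.e. $D(TA)=D(A)$); (io1) $TD(A)\subseteq D(B)$; (io2) $BT\xi=TA\xi$ for all $\xi\in D(A)$. $A\dashv B$ (quasi-similarity) means there is such an intertwining operator $T$ which is injective with densely defined inverse $T^{-1}$. $\rho(A)$ is the set of $\lambda\in\mathbb C$ such that $A-\lambda I$ is injective with bounded everywhere defined inverse. *)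

theory Defs
  imports "HOL-Analysis.Analysis"
begin

class complex_vector = real_vector +
  fixes scaleC :: "complex \<Rightarrow> 'a \<Rightarrow> 'a" (infixr \<open>*\<^sub>C\<close> 75)
  assumes scaleC_add_right: "a *\<^sub>C (x + y) = a *\<^sub>C x + a *\<^sub>C y"
    and scaleC_add_left: "(a + b) *\<^sub>C x = a *\<^sub>C x + b *\<^sub>C x"
    and scaleC_scaleC: "a *\<^sub>C (b *\<^sub>C x) = (a * b) *\<^sub>C x"
    and scaleC_one: "1 *\<^sub>C x = x"
    and scaleR_scaleC: "scaleR r x = complex_of_real r *\<^sub>C x"

class complex_inner = complex_vector + real_normed_vector +
  fixes cinner :: "'a \<Rightarrow> 'a \<Rightarrow> complex"
  assumes cinner_commute: "cinner x y = cnj (cinner y x)"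
    and cinner_add_left: "cinner (x + y) z = cinner x z + cinner y z"
    and cinner_scaleC_left: "cinner (r *\<^sub>C x) y = cnj r * cinner x y"
    and cinner_self_nonneg: "0 \<le> Re (cinner x x)"
    and cinner_eq_zero_iff: "cinner x x = 0 \<longleftrightarrow> x = 0"
    and norm_eq_sqrt_cinner: "norm x = sqrt (Re (cinner x x))"

class chilbert_space = complex_inner + complete_space

instantiation complex :: chilbert_space
begin
definition scaleC_complex_def: "scaleC a (x::complex) = a * x"
definition cinner_complex_def: "cinner (x::complex) y = cnj x * y"
instance
proof
  fix x :: complex
  show "norm x = sqrt (Re (cinner x x))"
    by (simp add: cinner_complex_def cmod_def power2_eq_square)
qed (auto simp: scaleC_complex_def cinner_complex_def algebra_simps scaleR_conv_of_real)
end

section \<open>Unbounded operators, represented by a domain and a function\<close>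

definition csubspace :: "'a::complex_vector set \<Rightarrow> bool" where
  "csubspace S \<longleftrightarrow> 0 \<in> S \<and> (\<forall>x\<in>S. \<forall>y\<in>S. x + y \<in> S) \<and> (\<forall>c. \<forall>x\<in>S. c *\<^sub>C x \<in> S)"

definition is_operator :: "'a::complex_vector set \<Rightarrow> ('a \<Rightarrow> 'b::complex_vector) \<Rightarrow> bool" where
  "is_operator D f \<longleftrightarrow> csubspace D \<and>
     (\<forall>x\<in>D. \<forall>y\<in>D. f (x + y) = f x + f y) \<and> (\<forall>c. \<forall>x\<in>D. f (c *\<^sub>C x) = c *\<^sub>C f x)"

definition densely_defined :: "'a::topological_space set \<Rightarrow> bool" where
  "densely_defined D \<longleftrightarrow> closure D = UNIV"

definition closed_operator :: "'a::topological_space set \<Rightarrow> ('a \<Rightarrow> 'b::topological_space) \<Rightarrow> bool" where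
  "closed_operator D f \<longleftrightarrow> closed {(x, f x) | x. x \<in> D}"

definition intertwining ::
  "'a::chilbert_space set \<Rightarrow> ('a \<Rightarrow> 'a) \<Rightarrow> 'b::chilbert_space set \<Rightarrow> ('b \<Rightarrow> 'b)
     \<Rightarrow> 'a set \<Rightarrow> ('a \<Rightarrow> 'b) \<Rightarrow> bool" where
  "intertwining DA A DB B DT T \<longleftrightarrow>
     is_operator DT T \<and> densely_defined DT \<and> closed_operator DT T \<and>
     DA \<subseteq> DT \<and> (\<forall>x\<in>DA. A x \<in> DT) \<and>
     T ` DA \<subseteq> DB \<and>
     (\<forall>x\<in>DA. B (T x) = T (A x))"

text \<open>T is an intertwining operator which is injective with densely defined inverse
  (the domain of T^{-1} is the range of T).\<close>
definition quasi_similarity_op ::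
  "'a::chilbert_space set \<Rightarrow> ('a \<Rightarrow> 'a) \<Rightarrow> 'b::chilbert_space set \<Rightarrow> ('b \<Rightarrow> 'b)
     \<Rightarrow> 'a set \<Rightarrow> ('a \<Rightarrow> 'b) \<Rightarrow> bool" where
  "quasi_similarity_op DA A DB B DT T \<longleftrightarrow>
     intertwining DA A DB B DT T \<and> inj_on T DT \<and> densely_defined (T ` DT)"

definition resolvent_set :: "'a::chilbert_space set \<Rightarrow> ('a \<Rightarrow> 'a) \<Rightarrow> complex set" where
  "resolvent_set D A = {z. inj_on (\<lambda>x. A x - z *\<^sub>C x) D \<and>
     (\<exists>R. (\<forall>y. R y \<in> D \<and> A (R y) - z *\<^sub>C R y = y) \<and>
          (\<forall>x\<in>D. R (A x - z *\<^sub>C x) = x) \<and>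
          (\<exists>C. \<forall>y. norm (R y) \<le> C * norm y))}"

end

theory Submission
  imports Defs
begin

instance chilbert_space \<subseteq> banach ..

lemma baire_step:
  fixes T :: "'a::banach \<Rightarrow> 'b::real_normed_vector"
  shows "\<exists>n x0 r. r > 0 \<and> ball x0 r \<subseteq> closure {x. norm (T x) \<le> real n}"
proof (rule ccontr)
  assume H: "\<not> ?thesis"
  define S where "S n = closure {x. norm (T x) \<le> real n}" for n
  have "Met_TC.mtopology interior_of \<Union>(range S) = {}"
  proof (rule Met_TC.metric_Baire_category_alt)
    show "Met_TC.mcomplete TYPE('a)" by (simp add: complete_UNIV)
    show "countable (range S)" by simp
    fix U assume "U \<in> range S"
    then obtain n where U: "U = S n" by auto
    have "interior U = {}"
    proof (rule ccontr)
      assume "interior U \<noteq> {}"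
      then obtain x where "x \<in> interior U" by auto
      then obtain r where "r > 0" "ball x r \<subseteq> interior U" using open_contains_ball open_interior by blast
      then have "ball x r \<subseteq> U" by (meson interior_subset order_trans)
      then have "ball x r \<subseteq> closure {x. norm (T x) \<le> real n}" using U S_def by simp
      then have "\<exists>n x0 r. r > 0 \<and> ball x0 r \<subseteq> closure {x. norm (T x) \<le> real n}"
        using \<open>r > 0\<close> by blast
      then show False using H by (rule notE[rotated])
    qed
    moreover have "closed U" using U S_def by simp
    ultimately show "closedin Met_TC.mtopology U \<and> Met_TC.mtopology interior_of U = {}"
      by simp
  qed
  moreover have "\<Union>(range S) = UNIV"
  proof -
    { fix x :: 'a
      obtain n where "norm (T x) \<le> real n" using real_arch_simple by blast
      then have "x \<in> S n" unfolding S_def by (meson closure_subset mem_Collect_eq subsetD)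
      then have "x \<in> \<Union>(range S)" by blast }
    then show ?thesis by auto
  qed
  ultimately show False by simp
qed

lemma sym_step:
  fixes T :: "'a::real_normed_vector \<Rightarrow> 'b::real_normed_vector"
  assumes lin: "linear T" and B: "ball x0 r \<subseteq> closure {x. norm (T x) \<le> M}"
    and z: "norm z < r"
  shows "z \<in> closure {x. norm (T x) \<le> 2 * M}"
proof -
  have "r > 0" using z norm_ge_zero[of z] by linarith
  then have x0: "x0 \<in> closure {x. norm (T x) \<le> M}" using B by (meson centre_in_ball subsetD)
  have x1: "x0 + z \<in> closure {x. norm (T x) \<le> M}" using B z by (auto simp: subset_iff dist_norm)
  show ?thesis unfolding closure_approachable
  proof (intro allI impI)
    fix e :: real assume e: "e > 0"
    obtain a where a: "norm (T a) \<le> M" "dist a (x0 + z) < e/2"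
      using x1 e unfolding closure_approachable by (metis half_gt_zero mem_Collect_eq)
    obtain b where b: "norm (T b) \<le> M" "dist b x0 < e/2"
      using x0 e unfolding closure_approachable by (metis half_gt_zero mem_Collect_eq)
    have "norm (T (a - b)) \<le> 2 * M"
      using a b norm_triangle_ineq4[of "T a" "T b"] by (simp add: linear_diff[OF lin])
    moreover have "dist (a - b) z < e"
    proof -
      have "dist (a - b) z = norm ((a - (x0 + z)) - (b - x0))" by (simp add: dist_norm algebra_simps)
      also have "\<dots> \<le> norm (a - (x0 + z)) + norm (b - x0)" by (rule norm_triangle_ineq4)
      also have "\<dots> < e" using a b by (simp add: dist_norm)
      finally show ?thesis .
    qed
    ultimately show "\<exists>y\<in>{x. norm (T x) \<le> 2 * M}. dist y z < e" by blast
  qed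
qed

lemma approx_step:
  fixes T :: "'a::real_normed_vector \<Rightarrow> 'b::real_normed_vector"
  assumes lin: "linear T" and r: "r > 0" and B: "\<And>z. norm z < r \<Longrightarrow> z \<in> closure {x. norm (T x) \<le> M}"
    and e: "e > 0"
  shows "\<exists>x. norm (T x) \<le> (2 * M / r) * norm y \<and> norm (y - x) < e"
proof (cases "y = 0")
  case True
  then show ?thesis using e by (auto intro!: exI[of _ 0] simp: linear_0[OF lin])
next
  case False
  define s where "s = r / (2 * norm y)"
  have s: "s > 0" using False r by (simp add: s_def)
  have "norm (s *\<^sub>R y) < r" using False r s by (simp add: s_def)
  then have "s *\<^sub>R y \<in> closure {x. norm (T x) \<le> M}" by (rule B)
  then obtain a where a: "norm (T a) \<le> M" "dist a (s *\<^sub>R y) < s * e"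
    using s e unfolding closure_approachable by (metis mult_pos_pos mem_Collect_eq)
  define x where "x = a /\<^sub>R s"
  have "norm (T x) = norm (T a) / s" using s by (simp add: x_def linear_scale[OF lin] divide_inverse mult.commute)
  also have "\<dots> \<le> M / s" using a s by (simp add: divide_right_mono)
  also have "\<dots> = (2 * M / r) * norm y" using False r by (simp add: s_def field_simps)
  finally have 1: "norm (T x) \<le> (2 * M / r) * norm y" .
  have "y - x = (s *\<^sub>R y - a) /\<^sub>R s" using s by (simp add: x_def algebra_simps)
  then have "norm (y - x) = norm (s *\<^sub>R y - a) / s" using s by (simp add: divide_inverse mult.commute)
  also have "\<dots> < e" using a s by (simp add: dist_norm norm_minus_commute field_simps)
  finally show ?thesis using 1 by blast
qed

lemma iter_bound:
  fixes T :: "'a::banach \<Rightarrow> 'b::banach"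
  assumes lin: "linear T" and K: "K \<ge> 0"
    and app: "\<And>y e. e > 0 \<Longrightarrow> \<exists>x. norm (T x) \<le> K * norm y \<and> norm (y - x) < e"
    and clo: "\<And>xs x w. xs \<longlonglongrightarrow> x \<Longrightarrow> (\<lambda>n. T (xs n)) \<longlonglongrightarrow> w \<Longrightarrow> T x = w"
  shows "norm (T y) \<le> 2 * K * norm y"
proof (cases "y = 0")
  case True
  then show ?thesis by (simp add: linear_0[OF lin])
next
  case False
  define c where "c = norm y"
  have c: "c > 0" using False by (simp add: c_def)
  define f where "f z k = (SOME x. norm (T x) \<le> K * norm z \<and> norm (z - x) < c / 2 ^ Suc k)" for z k
  have f: "norm (T (f z k)) \<le> K * norm z \<and> norm (z - f z k) < c / 2 ^ Suc k" for z k
  proof -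
    have "c / 2 ^ Suc k > 0" using c by simp
    from app[OF this] show ?thesis unfolding f_def by (rule someI_ex)
  qed
  define yy where "yy = rec_nat y (\<lambda>k z. z - f z k)"
  have yy0: "yy 0 = y" and yyS: "yy (Suc k) = yy k - f (yy k) k" for k by (simp_all add: yy_def)
  define xx where "xx k = f (yy k) k" for k
  have yyb: "norm (yy k) \<le> c / 2 ^ k" for k
  proof (cases k)
    case 0 then show ?thesis by (simp add: yy0 c_def)
  next
    case (Suc m)
    have "norm (yy (Suc m)) < c / 2 ^ Suc m" using f[of "yy m" m] by (simp add: yyS)
    then show ?thesis using Suc by simp
  qed
  have Tb: "norm (T (xx k)) \<le> (K * c) * (1/2) ^ k" for k
  proof -
    have "norm (T (xx k)) \<le> K * norm (yy k)" using f[of "yy k" k] by (simp add: xx_def)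
    also have "\<dots> \<le> K * (c / 2 ^ k)" using yyb[of k] K by (rule mult_left_mono)
    also have "\<dots> = (K * c) * (1/2) ^ k" by (simp add: power_divide)
    finally show ?thesis .
  qed
  have part: "(\<Sum>i<N. xx i) = y - yy N" for N
  proof -
    have "(\<Sum>i<N. xx i) = (\<Sum>i<N. yy i - yy (Suc i))" by (simp add: yyS xx_def)
    also have "\<dots> = yy 0 - yy N" by (rule sum_lessThan_telescope')
    finally show ?thesis by (simp add: yy0)
  qed
  have "(\<lambda>N. c * (1/2) ^ N) \<longlonglongrightarrow> c * 0"
    by (intro tendsto_mult tendsto_const LIMSEQ_power_zero) simp
  then have "(\<lambda>N. c * (1/2) ^ N) \<longlonglongrightarrow> 0" by simp
  then have "yy \<longlonglongrightarrow> 0"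
    by (rule Lim_null_comparison[rotated]) (auto intro!: always_eventually simp: yyb power_divide)
  then have conv: "(\<lambda>N. \<Sum>i<N. xx i) \<longlonglongrightarrow> y"
    unfolding part using tendsto_diff[OF tendsto_const[of y], of yy 0 sequentially] by simp
  have gs: "summable (\<lambda>k. (K * c) * (1/2::real) ^ k)"
    by (intro summable_mult summable_geometric) simp
  have sT: "summable (\<lambda>k. T (xx k))"
    by (rule summable_comparison_test[OF _ gs]) (auto intro: Tb)
  have "(\<lambda>N. \<Sum>i<N. T (xx i)) \<longlonglongrightarrow> (\<Sum>k. T (xx k))" by (rule summable_LIMSEQ[OF sT])
  then have "(\<lambda>N. T (\<Sum>i<N. xx i)) \<longlonglongrightarrow> (\<Sum>k. T (xx k))" by (simp add: linear_sum[OF lin])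
  from clo[OF conv this] have Ty: "T y = (\<Sum>k. T (xx k))" .
  have "norm (T y) \<le> (\<Sum>k. (K * c) * (1/2::real) ^ k)"
    unfolding Ty by (rule norm_suminf_le[OF Tb gs])
  also have "\<dots> = 2 * K * norm y"
    using suminf_geometric[of "1/2::real"] by (simp add: suminf_mult c_def)
  finally show ?thesis .
qed


theorem proposition3p17:
  fixes DA :: "'a::chilbert_space set" and A :: "'a \<Rightarrow> 'a"
    and DB :: "'b::chilbert_space set" and B :: "'b \<Rightarrow> 'b"
    and DT :: "'a set" and T :: "'a \<Rightarrow> 'b"
  assumes "is_operator DA A" and "densely_defined DA"
    and "is_operator DB B" and "densely_defined DB"
    and "quasi_similarity_op DA A DB B DT T"
    and "resolvent_set DA A \<noteq> {}"
  shows "DT = UNIV \<and> (\<exists>C. \<forall>x. norm (T x) \<le> C * norm x)"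
proof -
  have I: "is_operator DT T \<and> closed_operator DT T \<and> DA \<subseteq> DT \<and> (\<forall>x\<in>DA. A x \<in> DT)"
    using assms(5) unfolding quasi_similarity_op_def intertwining_def by blast
  have opT: "is_operator DT T" using I by blast
  have cloT: "closed_operator DT T" using I by blast
  have sub: "DA \<subseteq> DT" using I by blast
  have AD: "\<forall>x\<in>DA. A x \<in> DT" using I by blast
  have cs: "csubspace DT" using opT unfolding is_operator_def by simp
  have addT: "\<And>x y. x \<in> DT \<Longrightarrow> y \<in> DT \<Longrightarrow> T (x + y) = T x + T y"
    and sclT: "\<And>c x. x \<in> DT \<Longrightarrow> T (c *\<^sub>C x) = c *\<^sub>C T x"
    using opT unfolding is_operator_def by blast+
  obtain z where "z \<in> resolvent_set DA A" using assms(6) by blast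
  then obtain R where R: "\<And>y. R y \<in> DA \<and> A (R y) - z *\<^sub>C R y = y"
    unfolding resolvent_set_def by blast
  have neg: "(-1::complex) *\<^sub>C v = - v" for v :: 'a
    using scaleR_scaleC[of "-1" v] by simp
  have DTU: "DT = UNIV"
  proof -
    { fix y
      have r1: "R y \<in> DT" using R sub by blast
      have r2: "A (R y) \<in> DT" using R AD by blast
      have "z *\<^sub>C R y \<in> DT" using cs r1 unfolding csubspace_def by blast
      then have "(-1::complex) *\<^sub>C (z *\<^sub>C R y) \<in> DT" using cs unfolding csubspace_def by blast
      then have "A (R y) + (-1::complex) *\<^sub>C (z *\<^sub>C R y) \<in> DT" using cs r2 unfolding csubspace_def by blast
      then have "y \<in> DT" using R[of y] by (simp add: neg) }
    then show ?thesis by blast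
  qed
  have lin: "linear T"
  proof (rule linearI)
    show "T (x + y) = T x + T y" for x y using addT DTU by simp
    show "T (r *\<^sub>R x) = r *\<^sub>R T x" for r x
      using sclT[of x "complex_of_real r"] DTU by (simp add: scaleR_scaleC)
  qed
  have clo: "T x = w" if xs: "xs \<longlonglongrightarrow> x" and ws: "(\<lambda>n. T (xs n)) \<longlonglongrightarrow> w" for xs x w
  proof -
    let ?G = "{(x, T x) | x. x \<in> DT}"
    have "closed ?G" using cloT unfolding closed_operator_def .
    moreover have "(\<lambda>n. (xs n, T (xs n))) \<longlonglongrightarrow> (x, w)" using xs ws by (rule tendsto_Pair)
    moreover have "\<forall>n. (xs n, T (xs n)) \<in> ?G" unfolding DTU by blast
    ultimately have "(x, w) \<in> ?G" by (meson closed_sequentially)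
    then show ?thesis by auto
  qed
  obtain n x0 r where r: "r > 0" and B: "ball x0 r \<subseteq> closure {x. norm (T x) \<le> real n}"
    using baire_step[of T] by blast
  have B2: "\<And>v. norm v < r \<Longrightarrow> v \<in> closure {x. norm (T x) \<le> 2 * real n}"
    using sym_step[OF lin B] by blast
  have app: "\<And>y e. e > 0 \<Longrightarrow> \<exists>x. norm (T x) \<le> (2 * (2 * real n) / r) * norm y \<and> norm (y - x) < e"
    using approx_step[OF lin r B2] by blast
  have K: "2 * (2 * real n) / r \<ge> 0" using r by simp
  have "norm (T x) \<le> (2 * (2 * (2 * real n) / r)) * norm x" for x
    apply (rule iter_bound[OF lin K])
    subgoal by (rule app)
    subgoal by (rule clo)
    done
  with DTU show ?thesis by blast
qed

end
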